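(* Let $T$ be a decomposition tree of a distance-hereditary graph $G$, and let $v$ be an internal node of $T$ labeled $\oplus$ with left child $v_l$ and right child $v_r$, such that property (P) holds at $v_l$ and at $v_r$. Assume that $\hat\alpha(v_r)\le\hat\beta(v_l)$, and that neither ($\hat\alpha(v_l)=\hat\beta(v_r)=0$) nor ($\hat\alpha(v_r)=\hat\beta(v_l)=0$) holds. Then $$\hat\alpha(v)=\begin{cases}\hat\alpha(v_l)-\hat\beta(v_r) & \text{if } \hat\alpha(v_l)>\hat\beta(v_r),\\ |\hat\alpha(v_l)-\hat\alpha(v_r)|\bmod 2 & \text{otherwise.}\end{cases}$$
   Context: All graphs are finite, simple, undirected. For a graph $H$ and $S\subseteq V(H)$, $N_H[S]$ is $S$ together with all vertices adjacent to a vertex of $S$, and $H[S]$ is the induced subgraph. Graphs carry a "twin set": a single-vertex graph on $x$ has twin set $\{x\}$. For vertex-disjoint graphs $G_l,G_r$ with twin sets $TS(G_l),TS(G_r)$: the true twin operation $G_l\otimes G_r$ has vertex set $V(G_l)\cup V(G_r)$, edge set $E(G_l)\cup E(G_r)\cup\{uw: u\in TS(G_l), w\in TS(G_r)\}$ and twin set $TS(G_l)\cup TS(G_r)$; the false twin operation $G_l\odot G_r$ has vertex set $V(G_l)\cup V(G_r)$, edge set $E(G_l)\cup E(G_r)$, twin set $TS(G_l)\cup TS(G_r)$; the attachment operation $G_l\oplus G_r$ has the same vertex and edge sets as $G_l\otimes G_r$ and twin set $TS(G_l)$. A decomposition tree $T$ of $G$ is a rooted binary tree whose leaves are in bijection with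 $V(G)$, each internal node having a left and a right child and a label in $\{\otimes,\odot,\oplus\}$; for each node $v$ define $\hat G(v)$ and $\hat{TS}(v)$ recursively: for a leaf $x$, the single-vertex graph on $x$ with twin set $\{x\}$; for an internal node $v$ with label $\circ$ and children $v_l,v_r$, $\hat G(v)=\hat G(v_l)\circ\hat G(v_r)$ with the corresponding twin set; one requires $\hat G(\text{root})=G$. Then $\hat G(v)$ is the subgraph of $G$ induced by the set $\hat V(v)$ of leaves below $v$. For a node $u$ and $0\le k\le|\hat{TS}(u)|$, call $S\subseteq\hat V(u)$ $k$-feasible if $\hat V(u)\setminus\hat{TS}(u)\subseteq N_{\hat G(u)}[S]$ and there is $X\subseteq S\cap\hat{TS}(u)$ with $|X|=k$ such that $\hat G(u)[S\setminus X]$ has a perfect matching. $\hat\gamma_k(u)$ is the minimum size of a $k$-feasible set. $\hat{min}(u)=\min\{\hat\gamma_k(u):0\le k\le|\hat{TS}(u)|\}$, and $\hat\alpha(u)$, $\hat\beta(u)$ are the smallest and the largest $k$ with $\hat\gamma_k(u)=\hat{min}(u)$. Property (P) holds at $u$ if for every $0\le k\le|\hat{TS}(u)|$: $\hat\gamma_k(u)=\hat{min}(u)+\hat\alpha(u)-k$ when $k\le\hat\alpha(u)$; $\hat\gamma_k(u)=\hat{min}(u)+k-\hat\beta(u)$ when $k\ge\hat\beta(u)$; $\hat\gamma_k(u)=\hat{min}(u)$ when $\hat\alpha(u)<k<\hat\beta(u)$ and $k-\hat\alpha(u)$ is even; and $\hat\gamma_k(u)=\hat{min}(u)+1$ otherwise.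 *)

theory Defs
  imports Main "HOL-Library.Extended_Nat"
begin

type_synonym 'a graph = "'a set \<times> 'a set set"

definition simple_graph :: "'a graph \<Rightarrow> bool" where
  "simple_graph G \<longleftrightarrow> finite (fst G) \<and>
     (\<forall>e\<in>snd G. \<exists>u w. e = {u, w} \<and> u \<noteq> w \<and> u \<in> fst G \<and> w \<in> fst G)"

definition walk_in :: "'a set set \<Rightarrow> 'a set \<Rightarrow> 'a \<Rightarrow> 'a \<Rightarrow> nat \<Rightarrow> bool" where
  "walk_in E W u w n \<longleftrightarrow> (\<exists>xs. length xs = Suc n \<and> hd xs = u \<and> last xs = w \<and> set xs \<subseteq> W \<and>
       (\<forall>i < n. {xs ! i, xs ! Suc i} \<in> E))"

text \<open>Distance between u and w in the induced subgraph G[W] (meaningful when connected).\<close>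
definition dist_in :: "'a set set \<Rightarrow> 'a set \<Rightarrow> 'a \<Rightarrow> 'a \<Rightarrow> nat" where
  "dist_in E W u w = (LEAST n. walk_in E W u w n)"

definition distance_hereditary :: "'a graph \<Rightarrow> bool" where
  "distance_hereditary G \<longleftrightarrow> simple_graph G \<and>
     (\<forall>W \<subseteq> fst G. \<forall>u\<in>W. \<forall>w\<in>W. (\<exists>n. walk_in (snd G) W u w n) \<longrightarrow>
        dist_in (snd G) W u w = dist_in (snd G) (fst G) u w)"

datatype op = TrueTwin | FalseTwin | Attach

datatype 'a dtree = Leaf 'a | Node op "'a dtree" "'a dtree"

fun leaves :: "'a dtree \<Rightarrow> 'a list" where
  "leaves (Leaf x) = [x]"
| "leaves (Node _ l r) = leaves l @ leaves r"

fun tV :: "'a dtree \<Rightarrow> 'a set" where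
  "tV (Leaf x) = {x}"
| "tV (Node _ l r) = tV l \<union> tV r"

fun tTS :: "'a dtree \<Rightarrow> 'a set" where
  "tTS (Leaf x) = {x}"
| "tTS (Node TrueTwin l r) = tTS l \<union> tTS r"
| "tTS (Node FalseTwin l r) = tTS l \<union> tTS r"
| "tTS (Node Attach l r) = tTS l"

fun tE :: "'a dtree \<Rightarrow> 'a set set" where
  "tE (Leaf x) = {}"
| "tE (Node TrueTwin l r) = tE l \<union> tE r \<union> {{u, w} |u w. u \<in> tTS l \<and> w \<in> tTS r}"
| "tE (Node FalseTwin l r) = tE l \<union> tE r"
| "tE (Node Attach l r) = tE l \<union> tE r \<union> {{u, w} |u w. u \<in> tTS l \<and> w \<in> tTS r}"

fun subtrees :: "'a dtree \<Rightarrow> 'a dtree set" where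
  "subtrees (Leaf x) = {Leaf x}"
| "subtrees (Node c l r) = insert (Node c l r) (subtrees l \<union> subtrees r)"

definition decomp_tree :: "'a dtree \<Rightarrow> 'a graph \<Rightarrow> bool" where
  "decomp_tree T G \<longleftrightarrow> distinct (leaves T) \<and> set (leaves T) = fst G \<and>
     tV T = fst G \<and> tE T = snd G"

definition closed_nbhd :: "'a set set \<Rightarrow> 'a set \<Rightarrow> 'a set" where
  "closed_nbhd E S = S \<union> {w. \<exists>s\<in>S. {s, w} \<in> E}"

definition has_perfect_matching :: "'a set set \<Rightarrow> 'a set \<Rightarrow> bool" where
  "has_perfect_matching E W \<longleftrightarrow> (\<exists>M \<subseteq> E. (\<forall>e\<in>M. e \<subseteq> W) \<and>
     (\<forall>e\<in>M. \<forall>e'\<in>M. e \<noteq> e' \<longrightarrow> e \<inter> e' = {}) \<and> \<Union>M = W)"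

definition k_feasible :: "'a dtree \<Rightarrow> nat \<Rightarrow> 'a set \<Rightarrow> bool" where
  "k_feasible u k S \<longleftrightarrow> S \<subseteq> tV u \<and> tV u - tTS u \<subseteq> closed_nbhd (tE u) S \<and>
     (\<exists>X. X \<subseteq> S \<inter> tTS u \<and> card X = k \<and> has_perfect_matching (tE u) (S - X))"

text \<open>Minimum size of a k-feasible set (infinity if none exists).\<close>
definition hgamma :: "'a dtree \<Rightarrow> nat \<Rightarrow> enat" where
  "hgamma u k = (INF S \<in> {S. k_feasible u k S}. enat (card S))"

definition hmin :: "'a dtree \<Rightarrow> enat" where
  "hmin u = Min (hgamma u ` {0..card (tTS u)})"

definition halpha :: "'a dtree \<Rightarrow> nat" where
  "halpha u = Min {k. k \<le> card (tTS u) \<and> hgamma u k = hmin u}"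

definition hbeta :: "'a dtree \<Rightarrow> nat" where
  "hbeta u = Max {k. k \<le> card (tTS u) \<and> hgamma u k = hmin u}"

definition propP :: "'a dtree \<Rightarrow> bool" where
  "propP u \<longleftrightarrow> (\<forall>k \<le> card (tTS u).
     (k \<le> halpha u \<longrightarrow> hgamma u k = hmin u + enat (halpha u - k)) \<and>
     (k \<ge> hbeta u \<longrightarrow> hgamma u k = hmin u + enat (k - hbeta u)) \<and>
     (halpha u < k \<and> k < hbeta u \<and> even (k - halpha u) \<longrightarrow> hgamma u k = hmin u) \<and>
     (halpha u < k \<and> k < hbeta u \<and> odd (k - halpha u) \<longrightarrow> hgamma u k = hmin u + 1))"

end

theory Submission
  imports Defs
begin


definition wft :: "'a dtree \<Rightarrow> bool" where "wft u \<longleftrightarrow> distinct (leaves u)"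

lemma tV_leaves: "tV u = set (leaves u)"
  by (induction u) auto

lemma finite_tV[simp]: "finite (tV u)"
  by (simp add: tV_leaves)

lemma TS_sub: "tTS u \<subseteq> tV u"
  by (induction u rule: tTS.induct) auto

lemma finite_TS[simp]: "finite (tTS u)"
  by (rule finite_subset[OF TS_sub finite_tV])

lemma TS_ne: "tTS u \<noteq> {}"
  by (induction u rule: tTS.induct) auto

lemma card_TS_pos: "card (tTS u) \<ge> 1"
  using TS_ne[of u] finite_TS[of u] by (simp add: Suc_leI card_gt_0_iff)

lemma wft_Node: "wft (Node c l r) \<Longrightarrow> wft l \<and> wft r \<and> tV l \<inter> tV r = {}"
  by (auto simp: wft_def tV_leaves)

lemma sub_wft: "t \<in> subtrees T \<Longrightarrow> wft T \<Longrightarrow> wft t"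
  by (induction T) (auto dest: wft_Node)

lemma edges: "wft u \<Longrightarrow> e \<in> tE u \<Longrightarrow> \<exists>a b. e = {a,b} \<and> a \<noteq> b \<and> a \<in> tV u \<and> b \<in> tV u"
proof (induction u arbitrary: e rule: tE.induct)
  case (1 x)
  then show ?case by simp
next
  case (2 l r)
  then show ?case using wft_Node[OF "2.prems"(1)] TS_sub[of l] TS_sub[of r] by fastforce
next
  case (3 l r)
  then show ?case using wft_Node[OF "3.prems"(1)] by fastforce
next
  case (4 l r)
  then show ?case using wft_Node[OF "4.prems"(1)] TS_sub[of l] TS_sub[of r] by fastforce
qed

lemma edge_sub: "wft u \<Longrightarrow> e \<in> tE u \<Longrightarrow> e \<subseteq> tV u"
  using edges by fastforce

lemma edge_card: "wft u \<Longrightarrow> e \<in> tE u \<Longrightarrow> card e = 2"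
  using edges by fastforce

lemma cn_mono: "E \<subseteq> E' \<Longrightarrow> S \<subseteq> S' \<Longrightarrow> closed_nbhd E S \<subseteq> closed_nbhd E' S'"
  unfolding closed_nbhd_def by blast

lemma pm_mono: "E \<subseteq> E' \<Longrightarrow> has_perfect_matching E W \<Longrightarrow> has_perfect_matching E' W"
proof -
  assume a: "E \<subseteq> E'" "has_perfect_matching E W"
  then obtain M where "M \<subseteq> E" "\<forall>e\<in>M. e \<subseteq> W" "\<forall>e\<in>M. \<forall>e'\<in>M. e \<noteq> e' \<longrightarrow> e \<inter> e' = {}" "\<Union>M = W"
    unfolding has_perfect_matching_def by blast
  moreover have "M \<subseteq> E'" using \<open>M \<subseteq> E\<close> a(1) by (rule subset_trans)
  ultimately show ?thesis unfolding has_perfect_matching_def by blast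
qed

lemma pm_empty: "has_perfect_matching E {}"
  unfolding has_perfect_matching_def by (rule exI[of _ "{}"]) auto

lemma pm_bij:
  assumes "bij_betw f A B" "A \<inter> B = {}"
  shows "has_perfect_matching {{f x, x} | x. x \<in> A} (A \<union> B)"
proof -
  let ?M = "{{f x, x} | x. x \<in> A}"
  have fB: "\<And>x. x \<in> A \<Longrightarrow> f x \<in> B" using assms(1) unfolding bij_betw_def by auto
  have inj: "\<And>x y. x \<in> A \<Longrightarrow> y \<in> A \<Longrightarrow> f x = f y \<Longrightarrow> x = y" 
    using assms(1) unfolding bij_betw_def inj_on_def by auto
  have d: "\<forall>e\<in>?M. \<forall>e'\<in>?M. e \<noteq> e' \<longrightarrow> e \<inter> e' = {}"
  proof (intro ballI impI)
    fix e e' assume "e \<in> ?M" "e' \<in> ?M" "e \<noteq> e'"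
    then obtain x y where xy: "x \<in> A" "y \<in> A" "e = {f x, x}" "e' = {f y, y}" by auto
    with \<open>e \<noteq> e'\<close> have "x \<noteq> y" by auto
    then have "f x \<noteq> f y" using inj xy by auto
    moreover have "f x \<in> B" "f y \<in> B" using fB xy by auto
    ultimately show "e \<inter> e' = {}" using xy \<open>x \<noteq> y\<close> assms(2) by auto
  qed
  have u: "\<Union>?M = A \<union> B"
  proof
    show "\<Union>?M \<subseteq> A \<union> B" using fB by auto
    show "A \<union> B \<subseteq> \<Union>?M"
    proof
      fix z assume "z \<in> A \<union> B"
      then show "z \<in> \<Union>?M"
      proof
        assume "z \<in> A" then show ?thesis by auto
      next
        assume "z \<in> B" then obtain x where "x \<in> A" "z = f x" using assms(1) unfolding bij_betw_def by auto
        then show ?thesis by auto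
      qed
    qed
  qed
  have s: "\<forall>e\<in>?M. e \<subseteq> A \<union> B" using fB by auto
  show ?thesis unfolding has_perfect_matching_def
    by (rule exI[of _ ?M]) (use d u s in simp)
qed

lemma pm_union:
  assumes "has_perfect_matching E1 W1" "has_perfect_matching E2 W2" "W1 \<inter> W2 = {}"
  shows "has_perfect_matching (E1 \<union> E2) (W1 \<union> W2)"
proof -
  obtain M1 where M1: "M1 \<subseteq> E1" "\<forall>e\<in>M1. e \<subseteq> W1" "\<forall>e\<in>M1. \<forall>e'\<in>M1. e \<noteq> e' \<longrightarrow> e \<inter> e' = {}" "\<Union>M1 = W1"
    using assms(1) unfolding has_perfect_matching_def by blast
  obtain M2 where M2: "M2 \<subseteq> E2" "\<forall>e\<in>M2. e \<subseteq> W2" "\<forall>e\<in>M2. \<forall>e'\<in>M2. e \<noteq> e' \<longrightarrow> e \<inter> e' = {}" "\<Union>M2 = W2"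
    using assms(2) unfolding has_perfect_matching_def by blast
  have d: "\<forall>e\<in>M1 \<union> M2. \<forall>e'\<in>M1 \<union> M2. e \<noteq> e' \<longrightarrow> e \<inter> e' = {}"
  proof (intro ballI impI)
    fix e e' assume a: "e \<in> M1 \<union> M2" "e' \<in> M1 \<union> M2" "e \<noteq> e'"
    show "e \<inter> e' = {}"
    proof (cases "e \<in> M1")
      case True
      show ?thesis
      proof (cases "e' \<in> M1")
        case True with \<open>e \<in> M1\<close> a(3) M1(3) show ?thesis by simp
      next
        case False
        then have "e' \<subseteq> W2" using a(2) M2(2) by simp
        moreover have "e \<subseteq> W1" using True M1(2) by simp
        ultimately show ?thesis using assms(3) by auto
      qed
    next
      case False
      then have e2: "e \<in> M2" using a(1) by simp
      show ?thesis
      proof (cases "e' \<in> M2")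
        case True with e2 a(3) M2(3) show ?thesis by simp
      next
        case False
        then have "e' \<subseteq> W1" using a(2) M1(2) by simp
        moreover have "e \<subseteq> W2" using e2 M2(2) by simp
        ultimately show ?thesis using assms(3) by auto
      qed
    qed
  qed
  have "M1 \<union> M2 \<subseteq> E1 \<union> E2" using M1(1) M2(1) by auto
  moreover have "\<forall>e\<in>M1 \<union> M2. e \<subseteq> W1 \<union> W2" using M1(2) M2(2) by auto
  moreover have "\<Union>(M1 \<union> M2) = W1 \<union> W2" using M1(4) M2(4) by simp
  ultimately show ?thesis unfolding has_perfect_matching_def using d by blast
qed

lemma pm_even:
  assumes "finite W" "\<forall>e\<in>E. card e = 2" "has_perfect_matching E W"
  shows "even (card W)"
proof -
  obtain M where M: "M \<subseteq> E" "\<forall>e\<in>M. e \<subseteq> W" "\<forall>e\<in>M. \<forall>e'\<in>M. e \<noteq> e' \<longrightarrow> e \<inter> e' = {}" "\<Union>M = W"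
    using assms(3) unfolding has_perfect_matching_def by blast
  have "pairwise disjnt M" using M(3) unfolding pairwise_def disjnt_def by blast
  moreover have "\<And>A. A \<in> M \<Longrightarrow> finite A" using M(2) assms(1) by (meson finite_subset)
  ultimately have "card (\<Union>M) = sum card M" by (rule card_Union_disjoint)
  also have "\<dots> = sum (\<lambda>_. 2) M" using M(1) assms(2) by (intro sum.cong) auto
  also have "\<dots> = 2 * card M" by simp
  finally show ?thesis using M(4) by simp
qed

lemma feas_parity:
  assumes "wft u" "k_feasible u k S"
  shows "even (card S - k) \<and> k \<le> card S"
proof -
  obtain X where X: "X \<subseteq> S \<inter> tTS u" "card X = k" "has_perfect_matching (tE u) (S - X)" and S: "S \<subseteq> tV u"
    using assms(2) unfolding k_feasible_def by blast
  have fS: "finite S" using finite_subset[OF S finite_tV] .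
  have XS: "X \<subseteq> S" using X(1) by simp
  have fX: "finite X" using finite_subset[OF XS fS] .
  have "even (card (S - X))"
  proof (rule pm_even[OF _ _ X(3)])
    show "finite (S - X)" using fS by simp
    show "\<forall>e\<in>tE u. card e = 2" using edge_card[OF assms(1)] by blast
  qed
  moreover have "card (S - X) = card S - k" using card_Diff_subset[OF fX XS] X(2) by simp
  moreover have "k \<le> card S" using card_mono[OF fS XS] X(2) by simp
  ultimately show ?thesis by simp
qed

lemma hg_le: "k_feasible u k S \<Longrightarrow> hgamma u k \<le> enat (card S)"
  unfolding hgamma_def by (rule INF_lower2[of S]) auto

lemma hg_ex:
  assumes "hgamma u k \<noteq> \<infinity>"
  shows "\<exists>S. k_feasible u k S \<and> hgamma u k = enat (card S)"
proof -
  let ?A = "(\<lambda>S. enat (card S)) ` {S. k_feasible u k S}"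
  have "?A \<noteq> {}"
  proof
    assume "?A = {}"
    then have "hgamma u k = Inf {}" unfolding hgamma_def by metis
    then show False using assms by (simp add: top_enat_def)
  qed
  then have "Inf ?A \<in> ?A" unfolding Inf_enat_def by (auto intro: LeastI)
  then show ?thesis unfolding hgamma_def by auto
qed


lemma feasE:
  assumes "k_feasible u k S"
  obtains X where "S \<subseteq> tV u" "tV u - tTS u \<subseteq> closed_nbhd (tE u) S"
    "X \<subseteq> S" "X \<subseteq> tTS u" "card X = k" "has_perfect_matching (tE u) (S - X)"
proof -
  from assms obtain X where "S \<subseteq> tV u" "tV u - tTS u \<subseteq> closed_nbhd (tE u) S"
    "X \<subseteq> S \<inter> tTS u" "card X = k" "has_perfect_matching (tE u) (S - X)"
    unfolding k_feasible_def by (elim conjE exE)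
  then show ?thesis by (intro that) auto
qed

lemma feasI:
  assumes "S \<subseteq> tV u" "tV u - tTS u \<subseteq> closed_nbhd (tE u) S"
    "X \<subseteq> S" "X \<subseteq> tTS u" "card X = k" "has_perfect_matching (tE u) (S - X)"
  shows "k_feasible u k S"
  unfolding k_feasible_def using assms by (intro conjI exI[of _ X]) auto
lemma twin_combine:
  assumes w: "wft (Node c l r)" and c: "c \<noteq> Attach"
    and fl: "k_feasible l k1 Sl" and fr: "k_feasible r k2 Sr"
  shows "k_feasible (Node c l r) (k1+k2) (Sl \<union> Sr)"
proof -
  have disj: "tV l \<inter> tV r = {}" using wft_Node[OF w] by simp
  have TSv: "tTS (Node c l r) = tTS l \<union> tTS r" using c by (cases c) auto
  have Ev: "tE l \<union> tE r \<subseteq> tE (Node c l r)" using c by (cases c) auto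
  obtain Xl where l: "Sl \<subseteq> tV l" "tV l - tTS l \<subseteq> closed_nbhd (tE l) Sl"
    "Xl \<subseteq> Sl" "Xl \<subseteq> tTS l" "card Xl = k1" "has_perfect_matching (tE l) (Sl - Xl)"
    using fl by (rule feasE)
  obtain Xr where r: "Sr \<subseteq> tV r" "tV r - tTS r \<subseteq> closed_nbhd (tE r) Sr"
    "Xr \<subseteq> Sr" "Xr \<subseteq> tTS r" "card Xr = k2" "has_perfect_matching (tE r) (Sr - Xr)"
    using fr by (rule feasE)
  have fXl: "finite Xl" using finite_subset[OF l(4) finite_TS] .
  have fXr: "finite Xr" using finite_subset[OF r(4) finite_TS] .
  have dX: "Xl \<inter> Xr = {}" using l(3) r(3) l(1) r(1) disj by blast
  show ?thesis
  proof (rule feasI[where X = "Xl \<union> Xr"])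
    show "Sl \<union> Sr \<subseteq> tV (Node c l r)" using l(1) r(1) by auto
    have "tV (Node c l r) - tTS (Node c l r) \<subseteq> (tV l - tTS l) \<union> (tV r - tTS r)"
      using TSv by auto
    also have "\<dots> \<subseteq> closed_nbhd (tE l) Sl \<union> closed_nbhd (tE r) Sr" using l(2) r(2) by blast
    also have "\<dots> \<subseteq> closed_nbhd (tE (Node c l r)) (Sl \<union> Sr)"
      using cn_mono[of "tE l" "tE (Node c l r)" Sl "Sl \<union> Sr"] cn_mono[of "tE r" "tE (Node c l r)" Sr "Sl \<union> Sr"] Ev
      by blast
    finally show "tV (Node c l r) - tTS (Node c l r) \<subseteq> closed_nbhd (tE (Node c l r)) (Sl \<union> Sr)" .
    show "Xl \<union> Xr \<subseteq> Sl \<union> Sr" using l(3) r(3) by blast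
    show "Xl \<union> Xr \<subseteq> tTS (Node c l r)" using l(4) r(4) TSv by blast
    show "card (Xl \<union> Xr) = k1 + k2" using card_Un_disjoint[OF fXl fXr dX] l(5) r(5) by simp
    have eq: "Sl \<union> Sr - (Xl \<union> Xr) = (Sl - Xl) \<union> (Sr - Xr)" using l(1) r(1) l(3) r(3) disj by blast
    have "has_perfect_matching (tE l \<union> tE r) ((Sl - Xl) \<union> (Sr - Xr))"
      by (rule pm_union[OF l(6) r(6)]) (use l(1) r(1) disj in blast)
    then show "has_perfect_matching (tE (Node c l r)) (Sl \<union> Sr - (Xl \<union> Xr))"
      unfolding eq by (rule pm_mono[OF Ev])
  qed
qed


lemma att_combine:
  assumes w: "wft (Node Attach l r)"
    and fl: "k_feasible l k' Sl" and fr: "k_feasible r j Sr" and jk: "j \<le> k'" and k1: "1 \<le> k'"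
  shows "k_feasible (Node Attach l r) (k' - j) (Sl \<union> Sr)"
proof -
  let ?v = "Node Attach l r"
  let ?C = "{{u, w} |u w. u \<in> tTS l \<and> w \<in> tTS r}"
  have disj: "tV l \<inter> tV r = {}" using wft_Node[OF w] by simp
  have TSv: "tTS ?v = tTS l" by simp
  have Ev: "tE ?v = tE l \<union> tE r \<union> ?C" by simp
  obtain Xl where l: "Sl \<subseteq> tV l" "tV l - tTS l \<subseteq> closed_nbhd (tE l) Sl"
    "Xl \<subseteq> Sl" "Xl \<subseteq> tTS l" "card Xl = k'" "has_perfect_matching (tE l) (Sl - Xl)"
    using fl by (rule feasE)
  obtain Xr where r: "Sr \<subseteq> tV r" "tV r - tTS r \<subseteq> closed_nbhd (tE r) Sr"
    "Xr \<subseteq> Sr" "Xr \<subseteq> tTS r" "card Xr = j" "has_perfect_matching (tE r) (Sr - Xr)"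
    using fr by (rule feasE)
  have fXl: "finite Xl" using finite_subset[OF l(4) finite_TS] .
  have fXr: "finite Xr" using finite_subset[OF r(4) finite_TS] .
  obtain Y where Y: "Y \<subseteq> Xl" "card Y = j" using obtain_subset_with_card_n[of j Xl] jk l(5) by metis
  have fY: "finite Y" using finite_subset[OF Y(1) fXl] .
  obtain f where f: "bij_betw f Xr Y" using finite_same_card_bij[OF fXr fY] Y(2) r(5) by metis
  have TSl: "tTS l \<subseteq> tV l" and TSr: "tTS r \<subseteq> tV r" by (rule TS_sub)+
  have dXY: "Xr \<inter> Y = {}" using Y(1) l(4) r(4) TSl TSr disj by blast
  obtain t where t: "t \<in> Xl" using k1 l(5) by (metis card.empty ex_in_conv not_one_le_zero)
  show ?thesis
  proof (rule feasI[where X = "Xl - Y"])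
    show "Sl \<union> Sr \<subseteq> tV ?v" using l(1) r(1) by auto
    have "tV ?v - tTS ?v \<subseteq> (tV l - tTS l) \<union> (tV r - tTS r) \<union> tTS r"
      by auto
    also have "\<dots> \<subseteq> closed_nbhd (tE ?v) (Sl \<union> Sr)"
    proof -
      have "closed_nbhd (tE l) Sl \<subseteq> closed_nbhd (tE ?v) (Sl \<union> Sr)" by (rule cn_mono) auto
      moreover have "closed_nbhd (tE r) Sr \<subseteq> closed_nbhd (tE ?v) (Sl \<union> Sr)" by (rule cn_mono) auto
      moreover have "tTS r \<subseteq> closed_nbhd (tE ?v) (Sl \<union> Sr)"
      proof
        fix w assume "w \<in> tTS r"
        then have "{t, w} \<in> tE ?v" using t l(4) by auto
        moreover have "t \<in> Sl \<union> Sr" using t l(3) by auto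
        ultimately show "w \<in> closed_nbhd (tE ?v) (Sl \<union> Sr)" unfolding closed_nbhd_def by blast
      qed
      ultimately show ?thesis using l(2) r(2) by blast
    qed
    finally show "tV ?v - tTS ?v \<subseteq> closed_nbhd (tE ?v) (Sl \<union> Sr)" .
    show "Xl - Y \<subseteq> Sl \<union> Sr" using l(3) by blast
    show "Xl - Y \<subseteq> tTS ?v" using l(4) by auto
    show "card (Xl - Y) = k' - j" using card_Diff_subset[OF fY Y(1)] l(5) Y(2) by simp
    have eq: "Sl \<union> Sr - (Xl - Y) = ((Sl - Xl) \<union> (Sr - Xr)) \<union> (Xr \<union> Y)"
      using l(1) r(1) l(3) r(3) Y(1) disj by blast
    have p1: "has_perfect_matching (tE l \<union> tE r) ((Sl - Xl) \<union> (Sr - Xr))"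
      by (rule pm_union[OF l(6) r(6)]) (use l(1) r(1) disj in blast)
    have p2: "has_perfect_matching {{f x, x} | x. x \<in> Xr} (Xr \<union> Y)"
      by (rule pm_bij[OF f dXY])
    have p3: "has_perfect_matching (tE l \<union> tE r \<union> {{f x, x} | x. x \<in> Xr}) (((Sl - Xl) \<union> (Sr - Xr)) \<union> (Xr \<union> Y))"
      by (rule pm_union[OF p1 p2]) (use l(1) r(1) l(3) r(3) Y(1) disj in blast)
    have "{{f x, x} | x. x \<in> Xr} \<subseteq> ?C"
    proof
      fix e assume "e \<in> {{f x, x} | x. x \<in> Xr}"
      then obtain x where x: "x \<in> Xr" "e = {f x, x}" by blast
      have "f x \<in> tTS l" using f x(1) Y(1) l(4) unfolding bij_betw_def by blast
      moreover have "x \<in> tTS r" using x(1) r(4) by blast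
      ultimately show "e \<in> ?C" using x(2) by blast
    qed
    then have "tE l \<union> tE r \<union> {{f x, x} | x. x \<in> Xr} \<subseteq> tE ?v" using Ev by blast
    from pm_mono[OF this p3] show "has_perfect_matching (tE ?v) (Sl \<union> Sr - (Xl - Y))"
      unfolding eq .
  qed
qed



lemma pm_of: "M \<subseteq> E \<Longrightarrow> \<forall>e\<in>M. \<forall>e'\<in>M. e \<noteq> e' \<longrightarrow> e \<inter> e' = {} \<Longrightarrow> has_perfect_matching E (\<Union>M)"
  unfolding has_perfect_matching_def by (intro exI[of _ M]) auto

lemma exist: "wft u \<Longrightarrow> k \<le> card (tTS u) \<Longrightarrow> \<exists>S. k_feasible u k S"
proof (induction u arbitrary: k)
  case (Leaf x)
  then have "k = 0 \<or> k = 1" by auto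
  then show ?case
  proof
    assume "k = 0"
    have "k_feasible (Leaf x) k {}"
      by (rule feasI[where X = "{}"]) (auto simp: \<open>k = 0\<close> pm_empty)
    then show ?thesis by blast
  next
    assume "k = 1"
    have "k_feasible (Leaf x) k {x}"
      by (rule feasI[where X = "{x}"]) (auto simp: \<open>k = 1\<close> pm_empty)
    then show ?thesis by blast
  qed
next
  case (Node c l r)
  have wl: "wft l" and wr: "wft r" and disj: "tV l \<inter> tV r = {}" using wft_Node[OF Node.prems(1)] by auto
  show ?case
  proof (cases "c = Attach")
    case True
    have cTS: "card (tTS (Node c l r)) = card (tTS l)" using True by simp
    show ?thesis
    proof (cases "k = 0")
      case True
      obtain Sl where fl: "k_feasible l 1 Sl" using Node.IH(1)[OF wl] card_TS_pos[of l] by blast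
      obtain Sr where fr: "k_feasible r 1 Sr" using Node.IH(2)[OF wr] card_TS_pos[of r] by blast
      have "k_feasible (Node Attach l r) (1 - 1) (Sl \<union> Sr)"
        by (rule att_combine[OF Node.prems(1)[unfolded \<open>c = Attach\<close>] fl fr]) auto
      then show ?thesis using True \<open>c = Attach\<close> by auto
    next
      case False
      obtain Sl where fl: "k_feasible l k Sl" using Node.IH(1)[OF wl] Node.prems(2) cTS by auto
      obtain Sr where fr: "k_feasible r 0 Sr" using Node.IH(2)[OF wr] by blast
      have "k_feasible (Node Attach l r) (k - 0) (Sl \<union> Sr)"
        by (rule att_combine[OF Node.prems(1)[unfolded \<open>c = Attach\<close>] fl fr]) (use False in auto)
      then show ?thesis using \<open>c = Attach\<close> by auto
    qed
  next
    case False
    have dTS: "tTS l \<inter> tTS r = {}" using disj TS_sub[of l] TS_sub[of r] by blast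
    have "tTS (Node c l r) = tTS l \<union> tTS r" using False by (cases c) auto
    then have cTS: "card (tTS (Node c l r)) = card (tTS l) + card (tTS r)"
      using card_Un_disjoint[OF finite_TS finite_TS dTS] by simp
    define k1 where "k1 = min k (card (tTS l))"
    define k2 where "k2 = k - k1"
    have "k1 \<le> card (tTS l)" "k2 \<le> card (tTS r)" "k = k1 + k2"
      using Node.prems(2) cTS unfolding k1_def k2_def by auto
    obtain Sl where "k_feasible l k1 Sl" using Node.IH(1)[OF wl] \<open>k1 \<le> card (tTS l)\<close> by blast
    moreover obtain Sr where "k_feasible r k2 Sr" using Node.IH(2)[OF wr] \<open>k2 \<le> card (tTS r)\<close> by blast
    ultimately have "k_feasible (Node c l r) (k1 + k2) (Sl \<union> Sr)"
      by (rule twin_combine[OF Node.prems(1) False])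
    then show ?thesis using \<open>k = k1 + k2\<close> by auto
  qed
qed



lemma att_decomp:
  assumes w: "wft (Node Attach l r)" and fv: "k_feasible (Node Attach l r) k S"
  shows "\<exists>j. k_feasible l (k+j) (S \<inter> tV l) \<and> k_feasible r j (S \<inter> tV r)"
proof -
  let ?v = "Node Attach l r"
  let ?C = "{{u, w} |u w. u \<in> tTS l \<and> w \<in> tTS r}"
  have wl: "wft l" and wr: "wft r" and disj: "tV l \<inter> tV r = {}" using wft_Node[OF w] by auto
  have TSl: "tTS l \<subseteq> tV l" and TSr: "tTS r \<subseteq> tV r" by (rule TS_sub)+
  define C where "C = ?C"
  have Ev: "tE ?v = tE l \<union> tE r \<union> C" unfolding C_def by simp
  obtain X where S: "S \<subseteq> tV ?v" and dom: "tV ?v - tTS ?v \<subseteq> closed_nbhd (tE ?v) S"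
    and XS: "X \<subseteq> S" and XT: "X \<subseteq> tTS l" and cX: "card X = k" and pmv: "has_perfect_matching (tE ?v) (S - X)"
    using fv by (rule feasE) simp
  obtain M where M: "M \<subseteq> tE ?v" "\<forall>e\<in>M. e \<subseteq> S - X" "\<forall>e\<in>M. \<forall>e'\<in>M. e \<noteq> e' \<longrightarrow> e \<inter> e' = {}" "\<Union>M = S - X"
    using pmv unfolding has_perfect_matching_def by (elim exE conjE) simp
  have fS: "finite S" using finite_subset[OF S finite_tV] .
  have fX: "finite X" using finite_subset[OF XS fS] .
  have fM: "finite M"
  proof (rule finite_subset)
    show "M \<subseteq> Pow S" using M(2) by auto
    show "finite (Pow S)" using fS by simp
  qed
  have El: "\<And>e. e \<in> tE l \<Longrightarrow> e \<subseteq> tV l" using edge_sub[OF wl] by auto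
  have Er: "\<And>e. e \<in> tE r \<Longrightarrow> e \<subseteq> tV r" using edge_sub[OF wr] by auto
  have Cl: "\<And>e. e \<in> C \<Longrightarrow> \<exists>a b. e = {a, b} \<and> a \<in> tTS l \<and> b \<in> tTS r" unfolding C_def by auto
  have Cil: "\<And>e. e \<in> C \<Longrightarrow> \<exists>a. e \<inter> tV l = {a} \<and> a \<in> tTS l"
  proof -
    fix e assume "e \<in> C"
    then obtain a b where ab: "e = {a, b}" "a \<in> tTS l" "b \<in> tTS r" using Cl by metis
    have "b \<notin> tV l" using ab(3) TSr disj by auto
    moreover have "a \<in> tV l" using ab(2) TSl by auto
    ultimately have "e \<inter> tV l = {a}" using ab(1) by auto
    then show "\<exists>a. e \<inter> tV l = {a} \<and> a \<in> tTS l" using ab(2) by auto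
  qed
  have Cir: "\<And>e. e \<in> C \<Longrightarrow> \<exists>b. e \<inter> tV r = {b} \<and> b \<in> tTS r"
  proof -
    fix e assume "e \<in> C"
    then obtain a b where ab: "e = {a, b}" "a \<in> tTS l" "b \<in> tTS r" using Cl by metis
    have "a \<notin> tV r" using ab(2) TSl disj by auto
    moreover have "b \<in> tV r" using ab(3) TSr by auto
    ultimately have "e \<inter> tV r = {b}" using ab(1) by auto
    then show "\<exists>b. e \<inter> tV r = {b} \<and> b \<in> tTS r" using ab(3) by auto
  qed
  have CnotL: "\<And>e. e \<in> C \<Longrightarrow> \<not> e \<subseteq> tV l"
  proof -
    fix e assume "e \<in> C"
    then obtain b where "e \<inter> tV r = {b}" using Cir by blast
    then have "b \<in> e" "b \<in> tV r" by auto
    then show "\<not> e \<subseteq> tV l" using disj by auto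
  qed
  have CnotR: "\<And>e. e \<in> C \<Longrightarrow> \<not> e \<subseteq> tV r"
  proof -
    fix e assume "e \<in> C"
    then obtain a where "e \<inter> tV l = {a}" using Cil by blast
    then have "a \<in> e" "a \<in> tV l" by auto
    then show "\<not> e \<subseteq> tV r" using disj by auto
  qed
  define Mc where "Mc = M \<inter> C"
  define Ml where "Ml = M \<inter> tE l"
  define Mr where "Mr = M \<inter> tE r"
  define Yl where "Yl = \<Union>((\<lambda>e. e \<inter> tV l) ` Mc)"
  define Yr where "Yr = \<Union>((\<lambda>e. e \<inter> tV r) ` Mc)"
  have fMc: "finite Mc" unfolding Mc_def using fM by simp
  have dMc: "\<forall>e\<in>Mc. \<forall>e'\<in>Mc. e \<noteq> e' \<longrightarrow> e \<inter> e' = {}" using M(3) unfolding Mc_def by simp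
  have cYl: "card Yl = card Mc"
  proof -
    have "card Yl = (\<Sum>e\<in>Mc. card (e \<inter> tV l))" unfolding Yl_def
      by (rule card_UN_disjoint[OF fMc]) (use dMc in auto)
    also have "\<dots> = (\<Sum>e\<in>Mc. 1)"
    proof (rule sum.cong)
      fix e assume "e \<in> Mc"
      then obtain a where "e \<inter> tV l = {a}" using Cil unfolding Mc_def by blast
      then show "card (e \<inter> tV l) = 1" by simp
    qed simp
    finally show ?thesis by simp
  qed
  have cYr: "card Yr = card Mc"
  proof -
    have "card Yr = (\<Sum>e\<in>Mc. card (e \<inter> tV r))" unfolding Yr_def
      by (rule card_UN_disjoint[OF fMc]) (use dMc in auto)
    also have "\<dots> = (\<Sum>e\<in>Mc. 1)"
    proof (rule sum.cong)
      fix e assume "e \<in> Mc"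
      then obtain b where "e \<inter> tV r = {b}" using Cir unfolding Mc_def by blast
      then show "card (e \<inter> tV r) = 1" by simp
    qed simp
    finally show ?thesis by simp
  qed
  have YlT: "Yl \<subseteq> tTS l"
  proof
    fix x assume "x \<in> Yl"
    then obtain e where e: "e \<in> Mc" "x \<in> e \<inter> tV l" unfolding Yl_def by blast
    then obtain a where "e \<inter> tV l = {a}" "a \<in> tTS l" using Cil unfolding Mc_def by blast
    then show "x \<in> tTS l" using e(2) by simp
  qed
  have YrT: "Yr \<subseteq> tTS r"
  proof
    fix x assume "x \<in> Yr"
    then obtain e where e: "e \<in> Mc" "x \<in> e \<inter> tV r" unfolding Yr_def by blast
    then obtain b where "e \<inter> tV r = {b}" "b \<in> tTS r" using Cir unfolding Mc_def by blast
    then show "x \<in> tTS r" using e(2) by simp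
  qed
  have YlM: "Yl \<subseteq> S - X" unfolding Yl_def Mc_def using M(2) by blast
  have YrM: "Yr \<subseteq> S - X" unfolding Yr_def Mc_def using M(2) by blast
  have fYl: "finite Yl" using finite_subset[OF YlT finite_TS] .
  have fYr: "finite Yr" using finite_subset[OF YrT finite_TS] .
  have Mcases: "\<And>e. e \<in> M \<Longrightarrow> e \<in> Ml \<or> e \<in> Mr \<or> e \<in> Mc"
  proof -
    fix e assume "e \<in> M"
    moreover have "M \<subseteq> tE l \<union> tE r \<union> C" using M(1) by (simp only: Ev)
    ultimately show "e \<in> Ml \<or> e \<in> Mr \<or> e \<in> Mc" unfolding Ml_def Mr_def Mc_def by blast
  qed
  have UMl: "\<Union>Ml = S \<inter> tV l - (X \<union> Yl)"
  proof
    show "\<Union>Ml \<subseteq> S \<inter> tV l - (X \<union> Yl)"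
    proof
      fix x assume "x \<in> \<Union>Ml"
      then obtain e where e: "e \<in> M" "e \<in> tE l" "x \<in> e" unfolding Ml_def by blast
      have "x \<in> S - X" using e M(2) by blast
      moreover have "x \<in> tV l" using El[OF e(2)] e(3) by blast
      moreover have "x \<notin> Yl"
      proof
        assume "x \<in> Yl"
        then obtain e' where e': "e' \<in> Mc" "x \<in> e'" unfolding Yl_def by blast
        have "e' \<noteq> e" using CnotL[of e'] e'(1) El[OF e(2)] unfolding Mc_def by blast
        then have "e \<inter> e' = {}" using M(3) e(1) e'(1) unfolding Mc_def by blast
        then show False using e(3) e'(2) by blast
      qed
      ultimately show "x \<in> S \<inter> tV l - (X \<union> Yl)" by blast
    qed
    show "S \<inter> tV l - (X \<union> Yl) \<subseteq> \<Union>Ml"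
    proof
      fix x assume x: "x \<in> S \<inter> tV l - (X \<union> Yl)"
      then have "x \<in> \<Union>M" using M(4) by blast
      then obtain e where e: "e \<in> M" "x \<in> e" by blast
      have "e \<notin> Mr" using e(2) x Er disj unfolding Mr_def by blast
      moreover have "e \<notin> Mc" using e(2) x unfolding Yl_def by blast
      ultimately have "e \<in> Ml" using Mcases[OF e(1)] by blast
      then show "x \<in> \<Union>Ml" using e(2) by blast
    qed
  qed
  have fl: "k_feasible l (k + card Mc) (S \<inter> tV l)"
  proof (rule feasI[where X = "X \<union> Yl"])
    show "S \<inter> tV l \<subseteq> tV l" by simp
    show "tV l - tTS l \<subseteq> closed_nbhd (tE l) (S \<inter> tV l)"
    proof
      fix w assume w: "w \<in> tV l - tTS l"
      then have "w \<in> tV ?v - tTS ?v" by simp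
      then have "w \<in> closed_nbhd (tE ?v) S" using dom by blast
      then consider "w \<in> S" | s where "s \<in> S" "{s, w} \<in> tE ?v" unfolding closed_nbhd_def by blast
      then show "w \<in> closed_nbhd (tE l) (S \<inter> tV l)"
      proof cases
        case 1 then show ?thesis using w unfolding closed_nbhd_def by blast
      next
        case (2 s)
        have "{s, w} \<notin> tE r" using Er[of "{s,w}"] w disj by blast
        moreover have "{s, w} \<notin> C"
        proof
          assume "{s, w} \<in> C"
          then obtain a b where ab: "{s, w} = {a, b}" "a \<in> tTS l" "b \<in> tTS r" using Cl by metis
          then have "w = a \<or> w = b" by (metis doubleton_eq_iff)
          then show False using ab w TSr disj by blast
        qed
        moreover from 2(2) have "{s, w} \<in> tE l \<union> tE r \<union> C" by (simp only: Ev)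
        ultimately have "{s, w} \<in> tE l" by blast
        moreover then have "s \<in> tV l" using El by blast
        ultimately show ?thesis using 2(1) unfolding closed_nbhd_def by blast
      qed
    qed
    show "X \<union> Yl \<subseteq> S \<inter> tV l" using XS XT TSl YlM YlT by blast
    show "X \<union> Yl \<subseteq> tTS l" using XT YlT by blast
    have "X \<inter> Yl = {}" using YlM by blast
    then show "card (X \<union> Yl) = k + card Mc" using card_Un_disjoint[OF fX fYl] cX cYl by simp
    have "has_perfect_matching (tE l) (\<Union>Ml)"
      by (rule pm_of) (use M(3) in \<open>auto simp: Ml_def\<close>)
    then show "has_perfect_matching (tE l) (S \<inter> tV l - (X \<union> Yl))" using UMl by simp
  qed
  have UMr: "\<Union>Mr = S \<inter> tV r - Yr"
  proof
    show "\<Union>Mr \<subseteq> S \<inter> tV r - Yr"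
    proof
      fix x assume "x \<in> \<Union>Mr"
      then obtain e where e: "e \<in> M" "e \<in> tE r" "x \<in> e" unfolding Mr_def by blast
      have "x \<in> S" using e M(2) by blast
      moreover have "x \<in> tV r" using Er[OF e(2)] e(3) by blast
      moreover have "x \<notin> Yr"
      proof
        assume "x \<in> Yr"
        then obtain e' where e': "e' \<in> Mc" "x \<in> e'" unfolding Yr_def by blast
        have "e' \<noteq> e" using CnotR[of e'] e'(1) Er[OF e(2)] unfolding Mc_def by blast
        then have "e \<inter> e' = {}" using M(3) e(1) e'(1) unfolding Mc_def by blast
        then show False using e(3) e'(2) by blast
      qed
      ultimately show "x \<in> S \<inter> tV r - Yr" by blast
    qed
    show "S \<inter> tV r - Yr \<subseteq> \<Union>Mr"
    proof
      fix x assume x: "x \<in> S \<inter> tV r - Yr"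
      have "x \<notin> X" using x XT TSl disj by blast
      then have "x \<in> \<Union>M" using M(4) x by blast
      then obtain e where e: "e \<in> M" "x \<in> e" by blast
      have "e \<notin> Ml" using e(2) x El disj unfolding Ml_def by blast
      moreover have "e \<notin> Mc" using e(2) x unfolding Yr_def by blast
      ultimately have "e \<in> Mr" using Mcases[OF e(1)] by blast
      then show "x \<in> \<Union>Mr" using e(2) by blast
    qed
  qed
  have fr: "k_feasible r (card Mc) (S \<inter> tV r)"
  proof (rule feasI[where X = "Yr"])
    show "S \<inter> tV r \<subseteq> tV r" by simp
    show "tV r - tTS r \<subseteq> closed_nbhd (tE r) (S \<inter> tV r)"
    proof
      fix w assume w: "w \<in> tV r - tTS r"
      then have "w \<in> tV ?v - tTS ?v" using TSl disj by auto
      then have "w \<in> closed_nbhd (tE ?v) S" using dom by blast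
      then consider "w \<in> S" | s where "s \<in> S" "{s, w} \<in> tE ?v" unfolding closed_nbhd_def by blast
      then show "w \<in> closed_nbhd (tE r) (S \<inter> tV r)"
      proof cases
        case 1 then show ?thesis using w unfolding closed_nbhd_def by blast
      next
        case (2 s)
        have "{s, w} \<notin> tE l" using El[of "{s,w}"] w disj by blast
        moreover have "{s, w} \<notin> C"
        proof
          assume "{s, w} \<in> C"
          then obtain a b where ab: "{s, w} = {a, b}" "a \<in> tTS l" "b \<in> tTS r" using Cl by metis
          then have "w = a \<or> w = b" by (metis doubleton_eq_iff)
          then show False using ab w TSl disj by blast
        qed
        moreover from 2(2) have "{s, w} \<in> tE l \<union> tE r \<union> C" by (simp only: Ev)
        ultimately have "{s, w} \<in> tE r" by blast
        moreover then have "s \<in> tV r" using Er by blast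
        ultimately show ?thesis using 2(1) unfolding closed_nbhd_def by blast
      qed
    qed
    show "Yr \<subseteq> S \<inter> tV r" using YrM YrT TSr by blast
    show "Yr \<subseteq> tTS r" using YrT .
    show "card Yr = card Mc" using cYr .
    have "has_perfect_matching (tE r) (\<Union>Mr)"
      by (rule pm_of) (use M(3) in \<open>auto simp: Mr_def\<close>)
    then show "has_perfect_matching (tE r) (S \<inter> tV r - Yr)" using UMr by simp
  qed
  show ?thesis using fl fr by blast
qed



lemma feas_TS: "k_feasible u k S \<Longrightarrow> k \<le> card (tTS u)"
proof -
  assume "k_feasible u k S"
  then obtain X where "X \<subseteq> tTS u" "card X = k" by (rule feasE)
  then show ?thesis using card_mono[OF finite_TS] by metis
qed

lemma hg_fin: "wft u \<Longrightarrow> k \<le> card (tTS u) \<Longrightarrow> hgamma u k \<noteq> \<infinity>"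
proof -
  assume "wft u" "k \<le> card (tTS u)"
  then obtain S where "k_feasible u k S" using exist by blast
  then have "hgamma u k \<le> enat (card S)" by (rule hg_le)
  then show ?thesis by (cases "hgamma u k") simp_all
qed

lemma hmin_props:
  "(\<exists>i \<le> card (tTS u). hgamma u i = hmin u) \<and> (\<forall>i \<le> card (tTS u). hmin u \<le> hgamma u i)"
proof -
  let ?A = "hgamma u ` {0..card (tTS u)}"
  have f: "finite ?A" and ne: "?A \<noteq> {}" by auto
  have "hmin u \<in> ?A" unfolding hmin_def by (rule Min_in[OF f ne])
  moreover have "\<forall>i \<le> card (tTS u). hmin u \<le> hgamma u i"
    unfolding hmin_def using Min_le[OF f] by auto
  ultimately show ?thesis by auto
qed

lemma hmin_fin: "wft u \<Longrightarrow> \<exists>m. hmin u = enat m"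
proof -
  assume w: "wft u"
  obtain i where "i \<le> card (tTS u)" "hgamma u i = hmin u" using hmin_props by blast
  then have "hmin u \<noteq> \<infinity>" using hg_fin[OF w] by metis
  then show ?thesis by auto
qed

lemma alpha_props:
  "halpha u \<le> hbeta u \<and> hbeta u \<le> card (tTS u) \<and> hgamma u (halpha u) = hmin u \<and> hgamma u (hbeta u) = hmin u
   \<and> (\<forall>k \<le> card (tTS u). hgamma u k = hmin u \<longrightarrow> halpha u \<le> k \<and> k \<le> hbeta u)"
proof -
  let ?K = "{k. k \<le> card (tTS u) \<and> hgamma u k = hmin u}"
  have f: "finite ?K" by auto
  have ne: "?K \<noteq> {}" using hmin_props[of u] by auto
  have a: "halpha u \<in> ?K" unfolding halpha_def by (rule Min_in[OF f ne])
  have b: "hbeta u \<in> ?K" unfolding hbeta_def by (rule Max_in[OF f ne])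
  have c: "\<forall>k \<le> card (tTS u). hgamma u k = hmin u \<longrightarrow> halpha u \<le> k \<and> k \<le> hbeta u"
    unfolding halpha_def hbeta_def using Min_le[OF f] Max_ge[OF f] by auto
  show ?thesis using a b c by auto
qed

lemma hg_parity: "wft u \<Longrightarrow> hgamma u k = enat n \<Longrightarrow> even (n + k)"
proof -
  assume w: "wft u" and h: "hgamma u k = enat n"
  then obtain S where S: "k_feasible u k S" "hgamma u k = enat (card S)" using hg_ex by fastforce
  then have "card S = n" using h by simp
  moreover have "even (card S - k) \<and> k \<le> card S" by (rule feas_parity[OF w S(1)])
  ultimately show ?thesis by (metis add_diff_inverse_nat even_add not_le)
qed

lemma zero_set:
  assumes "propP u" "halpha u \<le> i" "i \<le> hbeta u" "even (i - halpha u)"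
  shows "hgamma u i = hmin u"
proof -
  have ib: "i \<le> card (tTS u)" using assms(3) alpha_props[of u] by linarith
  have P: "(i \<le> halpha u \<longrightarrow> hgamma u i = hmin u + enat (halpha u - i)) \<and>
     (i \<ge> hbeta u \<longrightarrow> hgamma u i = hmin u + enat (i - hbeta u)) \<and>
     (halpha u < i \<and> i < hbeta u \<and> even (i - halpha u) \<longrightarrow> hgamma u i = hmin u)"
    using assms(1) ib unfolding propP_def by blast
  show ?thesis
  proof (cases "i = halpha u")
    case True then show ?thesis using P by (simp add: zero_enat_def[symmetric])
  next
    case False
    show ?thesis
    proof (cases "i = hbeta u")
      case True then show ?thesis using P by (simp add: zero_enat_def[symmetric])
    next
      case False
      then show ?thesis using P assms \<open>i \<noteq> halpha u\<close> by auto
    qed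
  qed
qed

lemma alpha_char:
  assumes "k0 \<le> card (tTS u)" "hgamma u k0 \<le> M" "\<forall>k \<le> card (tTS u). M \<le> hgamma u k"
    "\<forall>k < k0. hgamma u k \<noteq> M"
  shows "halpha u = k0"
proof -
  obtain i where i: "i \<le> card (tTS u)" "hgamma u i = hmin u" using hmin_props by blast
  have "hmin u \<le> hgamma u k0" using hmin_props assms(1) by blast
  moreover have "M \<le> hmin u" using assms(3) i by metis
  ultimately have hm: "hmin u = M" using assms(2) by simp
  have g0: "hgamma u k0 = M" using assms(2,3,1) by (metis order_antisym)
  have "halpha u \<le> k0" using alpha_props[of u] assms(1) g0 hm by auto
  moreover have "hgamma u (halpha u) = M" using alpha_props[of u] hm by auto
  ultimately show ?thesis using assms(4) by (metis le_neq_implies_less)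
qed

lemma card_split: "wft (Node c l r) \<Longrightarrow> S \<subseteq> tV l \<union> tV r \<Longrightarrow> card S = card (S \<inter> tV l) + card (S \<inter> tV r)"
proof -
  assume w: "wft (Node c l r)" and S: "S \<subseteq> tV l \<union> tV r"
  have d: "tV l \<inter> tV r = {}" using wft_Node[OF w] by simp
  have "S = (S \<inter> tV l) \<union> (S \<inter> tV r)" using S by auto
  moreover have "(S \<inter> tV l) \<inter> (S \<inter> tV r) = {}" using d by auto
  ultimately show ?thesis using card_Un_disjoint[of "S \<inter> tV l" "S \<inter> tV r"] by (metis finite_Int finite_tV)
qed

lemma LB:
  assumes w: "wft (Node Attach l r)" and ml: "hmin l = enat ml" and mr: "hmin r = enat mr"
  shows "enat (ml + mr) \<le> hgamma (Node Attach l r) k"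
proof (cases "hgamma (Node Attach l r) k = \<infinity>")
  case True then show ?thesis by simp
next
  case False
  then obtain S where S: "k_feasible (Node Attach l r) k S" "hgamma (Node Attach l r) k = enat (card S)"
    using hg_ex by blast
  obtain j where fl: "k_feasible l (k+j) (S \<inter> tV l)" and fr: "k_feasible r j (S \<inter> tV r)"
    using att_decomp[OF w S(1)] by blast
  have "hmin l \<le> hgamma l (k+j)" using hmin_props feas_TS[OF fl] by blast
  also have "\<dots> \<le> enat (card (S \<inter> tV l))" by (rule hg_le[OF fl])
  finally have a: "ml \<le> card (S \<inter> tV l)" using ml by simp
  have "hmin r \<le> hgamma r j" using hmin_props feas_TS[OF fr] by blast
  also have "\<dots> \<le> enat (card (S \<inter> tV r))" by (rule hg_le[OF fr])
  finally have b: "mr \<le> card (S \<inter> tV r)" using mr by simp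
  have "S \<subseteq> tV l \<union> tV r" using S(1) unfolding k_feasible_def by simp
  then have "card S = card (S \<inter> tV l) + card (S \<inter> tV r)" by (rule card_split[OF w])
  then show ?thesis using a b S(2) by simp
qed

lemma tight:
  assumes w: "wft (Node Attach l r)" and ml: "hmin l = enat ml" and mr: "hmin r = enat mr"
    and eq: "hgamma (Node Attach l r) k = enat (ml + mr)"
  shows "\<exists>j. halpha l \<le> k + j \<and> j \<le> hbeta r"
proof -
  obtain S where S: "k_feasible (Node Attach l r) k S" "hgamma (Node Attach l r) k = enat (card S)"
    using hg_ex eq by (metis enat.distinct(2))
  obtain j where fl: "k_feasible l (k+j) (S \<inter> tV l)" and fr: "k_feasible r j (S \<inter> tV r)"
    using att_decomp[OF w S(1)] by blast
  have hl: "hmin l \<le> hgamma l (k+j)" using hmin_props feas_TS[OF fl] by blast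
  have hl2: "hgamma l (k+j) \<le> enat (card (S \<inter> tV l))" by (rule hg_le[OF fl])
  have hr: "hmin r \<le> hgamma r j" using hmin_props feas_TS[OF fr] by blast
  have hr2: "hgamma r j \<le> enat (card (S \<inter> tV r))" by (rule hg_le[OF fr])
  have "S \<subseteq> tV l \<union> tV r" using S(1) unfolding k_feasible_def by simp
  then have cs: "card S = card (S \<inter> tV l) + card (S \<inter> tV r)" by (rule card_split[OF w])
  have cS: "card S = ml + mr" using S(2) eq by simp
  have a: "ml \<le> card (S \<inter> tV l)" using hl hl2 ml by (metis enat_ord_simps(1) order_trans)
  have b: "mr \<le> card (S \<inter> tV r)" using hr hr2 mr by (metis enat_ord_simps(1) order_trans)
  have "card (S \<inter> tV l) = ml" "card (S \<inter> tV r) = mr" using a b cs cS by auto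
  then have "hgamma l (k+j) = hmin l" "hgamma r j = hmin r" using hl hl2 hr hr2 ml mr
    by (metis order_antisym)+
  then have "halpha l \<le> k + j" "j \<le> hbeta r" using alpha_props feas_TS[OF fl] feas_TS[OF fr] by blast+
  then show ?thesis by blast
qed

lemma UB:
  assumes w: "wft (Node Attach l r)" and ml: "hmin l = enat ml" and mr: "hmin r = enat mr"
    and gl: "hgamma l k' = hmin l" and gr: "hgamma r j = hmin r" and jk: "j \<le> k'" and k1: "1 \<le> k'"
  shows "hgamma (Node Attach l r) (k' - j) \<le> enat (ml + mr)"
proof -
  obtain Sl where Sl: "k_feasible l k' Sl" "hgamma l k' = enat (card Sl)" using hg_ex gl ml by (metis enat.distinct(2))
  obtain Sr where Sr: "k_feasible r j Sr" "hgamma r j = enat (card Sr)" using hg_ex gr mr by (metis enat.distinct(2))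
  have f: "k_feasible (Node Attach l r) (k' - j) (Sl \<union> Sr)" by (rule att_combine[OF w Sl(1) Sr(1) jk k1])
  have d: "tV l \<inter> tV r = {}" using wft_Node[OF w] by simp
  have "Sl \<subseteq> tV l" "Sr \<subseteq> tV r" using Sl(1) Sr(1) unfolding k_feasible_def by auto
  then have "Sl \<inter> Sr = {}" using d by auto
  then have "card (Sl \<union> Sr) = card Sl + card Sr"
    using card_Un_disjoint \<open>Sl \<subseteq> tV l\<close> \<open>Sr \<subseteq> tV r\<close> by (metis finite_subset finite_tV)
  moreover have "card Sl = ml" "card Sr = mr" using Sl(2) Sr(2) gl gr ml mr by auto
  ultimately show ?thesis using hg_le[OF f] by simp
qed



lemma absmod: "nat \<bar>int a - int b\<bar> mod 2 = (if even (a + b) then 0 else 1)"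
proof -
  have "even (nat \<bar>int a - int b\<bar>) \<longleftrightarrow> even (a + b)"
  proof (cases "a \<le> b")
    case True
    then obtain d where "b = a + d" using le_Suc_ex by blast
    then show ?thesis by (cases "even a") (simp_all add: nat_int_add)
  next
    case False
    then obtain d where "a = b + d" using le_Suc_ex[of b a] by auto
    then show ?thesis by (cases "even a") (simp_all add: nat_int_add)
  qed
  then show ?thesis by (simp add: mod2_eq_if)
qed

lemma ar1: "odd ((al::nat) + ar) \<Longrightarrow> even (ml + al) \<Longrightarrow> even (ml + bl) \<Longrightarrow> ar \<noteq> bl"
  by (auto simp: even_add)
lemma ar2: "odd ((al::nat) + ar) \<Longrightarrow> al \<le> ar \<Longrightarrow> even (ar + 1 - al)"
  by (auto simp: even_diff_nat even_add)
lemma ar3: "even ((al::nat) + ar) \<Longrightarrow> even (ar - al)"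
  by (auto simp: even_diff_nat)
lemma ar4: "bl \<noteq> (0::nat) \<Longrightarrow> even (ml + 0) \<Longrightarrow> even (ml + bl) \<Longrightarrow> 2 \<le> bl"
  by (cases bl) (auto simp: even_add dest: odd_pos)
lemma ar5: "(ar::nat) < al \<Longrightarrow> p = (if even (al + ar) then 0 else 1) \<Longrightarrow> ar \<le> al - p \<and> even (al - p - ar)"
  by (cases "even (al + ar)") (auto simp: even_diff_nat)
lemma ar6: "odd ((al::nat) + ar) \<Longrightarrow> even (ml + al) \<Longrightarrow> even (mr + ar) \<Longrightarrow> even (ml + mr) \<Longrightarrow> False"
  by (auto simp: even_add)

theorem lemma31:
  fixes T :: "'a dtree" and G :: "'a graph" and vl vr :: "'a dtree"
  assumes "distance_hereditary G"
    and "decomp_tree T G"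
    and "Node Attach vl vr \<in> subtrees T"
    and "propP vl" and "propP vr"
    and "halpha vr \<le> hbeta vl"
    and "\<not> (halpha vl = 0 \<and> hbeta vr = 0)"
    and "\<not> (halpha vr = 0 \<and> hbeta vl = 0)"
  shows "halpha (Node Attach vl vr) =
    (if halpha vl > hbeta vr then halpha vl - hbeta vr
     else nat \<bar>int (halpha vl) - int (halpha vr)\<bar> mod 2)"
proof -
  let ?v = "Node Attach vl vr"
  have wT: "wft T" using assms(2) unfolding decomp_tree_def wft_def by simp
  have w: "wft ?v" by (rule sub_wft[OF assms(3) wT])
  have wl: "wft vl" and wr: "wft vr" using wft_Node[OF w] by auto
  obtain ml where ml: "hmin vl = enat ml" using hmin_fin[OF wl] by blast
  obtain mr where mr: "hmin vr = enat mr" using hmin_fin[OF wr] by blast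
  define al where "al = halpha vl"
  define bl where "bl = hbeta vl"
  define ar where "ar = halpha vr"
  define br where "br = hbeta vr"
  have Pl: "al \<le> bl" "bl \<le> card (tTS vl)" "hgamma vl al = hmin vl" "hgamma vl bl = hmin vl"
    using alpha_props[of vl] unfolding al_def bl_def by auto
  have Pr: "ar \<le> br" "br \<le> card (tTS vr)" "hgamma vr ar = hmin vr" "hgamma vr br = hmin vr"
    using alpha_props[of vr] unfolding ar_def br_def by auto
  have pal: "even (ml + al)" using hg_parity[OF wl] Pl(3) ml by simp
  have pbl: "even (ml + bl)" using hg_parity[OF wl] Pl(4) ml by simp
  have par: "even (mr + ar)" using hg_parity[OF wr] Pr(3) mr by simp
  have pbr: "even (mr + br)" using hg_parity[OF wr] Pr(4) mr by simp
  have Zl: "\<And>i. al \<le> i \<Longrightarrow> i \<le> bl \<Longrightarrow> even (i - al) \<Longrightarrow> hgamma vl i = hmin vl"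
    using zero_set[OF assms(4)] unfolding al_def bl_def by blast
  have Zr: "\<And>i. ar \<le> i \<Longrightarrow> i \<le> br \<Longrightarrow> even (i - ar) \<Longrightarrow> hgamma vr i = hmin vr"
    using zero_set[OF assms(5)] unfolding ar_def br_def by blast
  have cv: "card (tTS ?v) = card (tTS vl)" by simp
  have LBv: "\<forall>k \<le> card (tTS ?v). enat (ml + mr) \<le> hgamma ?v k"
    using LB[OF w ml mr] by blast
  have h6: "ar \<le> bl" using assms(6) unfolding ar_def bl_def .
  have h7: "\<not> (al = 0 \<and> br = 0)" using assms(7) unfolding al_def br_def .
  have h8: "\<not> (ar = 0 \<and> bl = 0)" using assms(8) unfolding ar_def bl_def .
  show ?thesis
  proof (cases "al > br")
    case True
    have ub: "hgamma ?v (al - br) \<le> enat (ml + mr)"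
      by (rule UB[OF w ml mr Pl(3) Pr(4)]) (use True in auto)
    have "halpha ?v = al - br"
    proof (rule alpha_char[OF _ ub])
      show "al - br \<le> card (tTS ?v)" using Pl(1,2) cv by simp
      show "\<forall>k \<le> card (tTS ?v). enat (ml + mr) \<le> hgamma ?v k" by (rule LBv)
      show "\<forall>k < al - br. hgamma ?v k \<noteq> enat (ml + mr)"
      proof (intro allI impI notI)
        fix k assume k: "k < al - br" and e: "hgamma ?v k = enat (ml + mr)"
        obtain j where "halpha vl \<le> k + j" "j \<le> hbeta vr" using tight[OF w ml mr e] by blast
        then show False using k unfolding al_def br_def by simp
      qed
    qed
    then show ?thesis using True unfolding al_def br_def by simp
  next
    case False
    define p where "p = (if even (al + ar) then 0 else 1 :: nat)"
    have pp: "nat \<bar>int al - int ar\<bar> mod 2 = p" unfolding p_def by (rule absmod)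
    have ub: "hgamma ?v p \<le> enat (ml + mr)"
    proof (cases "al > ar")
      case True
      have j: "ar \<le> al - p \<and> even (al - p - ar)" by (rule ar5[OF True p_def])
      have "al - p \<le> br" using False by simp
      then have "hgamma vr (al - p) = hmin vr" using Zr j by blast
      then have "hgamma ?v (al - (al - p)) \<le> enat (ml + mr)"
        by (intro UB[OF w ml mr Pl(3)]) (use True in auto)
      moreover have "al - (al - p) = p" using True unfolding p_def by simp
      ultimately show ?thesis by simp
    next
      case nt: False
      show ?thesis
      proof (cases "even (al + ar)")
        case False
        have "ar \<noteq> bl" by (rule ar1[OF False pal pbl])
        then have "ar + 1 \<le> bl" using h6 by simp
        moreover have "even (ar + 1 - al)" by (rule ar2[OF False]) (use nt in simp)
        ultimately have "hgamma vl (ar + 1) = hmin vl" using Zl[of "ar + 1"] nt by simp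
        then have "hgamma ?v (ar + 1 - ar) \<le> enat (ml + mr)"
          by (intro UB[OF w ml mr _ Pr(3)]) auto
        then show ?thesis using False unfolding p_def by simp
      next
        case ev: True
        then have p0': "p = 0" unfolding p_def by simp
        show ?thesis
        proof (cases "ar = 0")
          case False
          have "even (ar - al)" by (rule ar3[OF ev])
          then have "hgamma vl ar = hmin vl" using Zl[of ar] nt h6 by simp
          then have "hgamma ?v (ar - ar) \<le> enat (ml + mr)"
            by (intro UB[OF w ml mr _ Pr(3)]) (use False in auto)
          then show ?thesis using p0' by simp
        next
          case True
          then have a0: "al = 0" using nt by simp
          have "bl \<noteq> 0" using h8 True by simp
          then have b2: "bl \<ge> 2" using ar4[of bl ml] pal pbl a0 by simp
          have "br \<noteq> 0" using h7 a0 by simp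
          then have r2: "br \<ge> 2" using ar4[of br mr] par pbr True by simp
          have g1: "hgamma vl 2 = hmin vl" using Zl[of 2] a0 b2 by simp
          have g2: "hgamma vr 2 = hmin vr" using Zr[of 2] True r2 by simp
          have "hgamma ?v (2 - 2) \<le> enat (ml + mr)"
            by (rule UB[OF w ml mr g1 g2]) auto
          then show ?thesis using p0' by simp
        qed
      qed
    qed
    have "halpha ?v = p"
    proof (rule alpha_char[OF _ ub])
      show "p \<le> card (tTS ?v)" using card_TS_pos[of vl] cv unfolding p_def by simp
      show "\<forall>k \<le> card (tTS ?v). enat (ml + mr) \<le> hgamma ?v k" by (rule LBv)
      show "\<forall>k < p. hgamma ?v k \<noteq> enat (ml + mr)"
      proof (intro allI impI notI)
        fix k assume k: "k < p" and e: "hgamma ?v k = enat (ml + mr)"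
        then have k0: "k = 0" and o: "odd (al + ar)" unfolding p_def by (auto split: if_splits)
        have "even (ml + mr + k)" by (rule hg_parity[OF w e])
        then have "even (ml + mr)" using k0 by simp
        then show False using ar6[OF o pal par] by simp
      qed
    qed
    then show ?thesis using False pp unfolding al_def br_def ar_def by simp
  qed
qed


end
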